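(* Let $\mathbf f$ be the Fibonacci word and $\mathbf g=0\mathbf f$. Then for every nonempty prefix $u$ of $\mathbf f$, the set $\mathbf f|_u$ is an IP$^*$-set (hence a central$^*$ set), and the sets $\mathbf g|_{0u}$ and $\mathbf g|_{1u}$ are both IP-sets (equivalently, central sets).
   Context: The Fibonacci word $\mathbf f=0100101001001\cdots\in\{0,1\}^{\mathbb N}$ is the fixed point of the substitution $0\mapsto01$, $1\mapsto0$. $\mathbb N=\{0,1,2,\dots\}$; for an infinite word $\omega=\omega_0\omega_1\cdots$ and a nonempty finite word $u$, $\omega|_u=\{n:\omega_n\cdots\omega_{n+|u|-1}=u\}$. A set $A\subseteq\mathbb N$ is an IP-set if there is a sequence $x_0<x_1<\cdots$ in $\mathbb N$ with $\sum_{n\in F}x_n\in A$ for all nonempty finite $F\subseteq\mathbb N$, and an IP$^*$-set if it meets every IP-set. $\beta\mathbb N$ is the set of ultrafilters on $\mathbb N$ with addition $A\in p+q$ iff $\{n:A-n\in p\}\in q$ ($A-n=\{m:m+n\in A\}$); a minimal idempotent is a non-principal $p$ with $p+p=p$ in the smallest two-sided ideal of $\beta\mathbb N$; a set is central if it belongs to some minimal idempotent and central$^*$ if it belongs to every minimal idempotent. *)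

theory Defs
  imports Main
begin

text \<open>Infinite words over {0,1} are functions nat => nat (values 0 and 1).\<close>

fun fib_subst :: "nat list \<Rightarrow> nat list" where
  "fib_subst [] = []"
| "fib_subst (a # w) = (if a = 0 then [0, 1] else [0]) @ fib_subst w"

text \<open>The Fibonacci word: its fixed point starting with 0. The n-th iterate
  of the substitution on [0] is a prefix of the fixed point of length at least n+1.\<close>
definition fib_word :: "nat \<Rightarrow> nat" where
  "fib_word n = ((fib_subst ^^ n) [0]) ! n"

definition fib_word_g :: "nat \<Rightarrow> nat" where
  "fib_word_g n = (if n = 0 then 0 else fib_word (n - 1))"

definition occ :: "(nat \<Rightarrow> nat) \<Rightarrow> nat list \<Rightarrow> nat set" where
  "occ \<omega> u = {n. \<forall>i < length u. \<omega> (n + i) = u ! i}"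

definition IP_set :: "nat set \<Rightarrow> bool" where
  "IP_set A \<longleftrightarrow> (\<exists>x :: nat \<Rightarrow> nat. strict_mono x \<and>
      (\<forall>F. finite F \<and> F \<noteq> {} \<longrightarrow> (\<Sum>n\<in>F. x n) \<in> A))"

definition IP_star_set :: "nat set \<Rightarrow> bool" where
  "IP_star_set A \<longleftrightarrow> (\<forall>B. IP_set B \<longrightarrow> A \<inter> B \<noteq> {})"

definition is_ultrafilter :: "nat set set \<Rightarrow> bool" where
  "is_ultrafilter p \<longleftrightarrow> UNIV \<in> p \<and> {} \<notin> p
     \<and> (\<forall>A B. A \<in> p \<and> A \<subseteq> B \<longrightarrow> B \<in> p)
     \<and> (\<forall>A B. A \<in> p \<and> B \<in> p \<longrightarrow> A \<inter> B \<in> p)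
     \<and> (\<forall>A. A \<in> p \<or> - A \<in> p)"

definition betaN :: "nat set set set" where
  "betaN = {p. is_ultrafilter p}"

definition uf_plus :: "nat set set \<Rightarrow> nat set set \<Rightarrow> nat set set" where
  "uf_plus p q = {A. {n. {m. m + n \<in> A} \<in> p} \<in> q}"

definition two_sided_ideal :: "nat set set set \<Rightarrow> bool" where
  "two_sided_ideal I \<longleftrightarrow> I \<noteq> {} \<and> I \<subseteq> betaN \<and>
     (\<forall>p\<in>I. \<forall>q\<in>betaN. uf_plus p q \<in> I \<and> uf_plus q p \<in> I)"

definition smallest_ideal :: "nat set set set" where
  "smallest_ideal = \<Inter> {I. two_sided_ideal I}"

definition minimal_idempotent :: "nat set set \<Rightarrow> bool" where
  "minimal_idempotent p \<longleftrightarrow> p \<in> betaN \<and> (\<forall>n. {n} \<notin> p)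
     \<and> uf_plus p p = p \<and> p \<in> smallest_ideal"

definition central :: "nat set \<Rightarrow> bool" where
  "central A \<longleftrightarrow> (\<exists>p. minimal_idempotent p \<and> A \<in> p)"

definition central_star :: "nat set \<Rightarrow> bool" where
  "central_star A \<longleftrightarrow> (\<forall>p. minimal_idempotent p \<longrightarrow> A \<in> p)"

end

theory Submission
  imports Defs "HOL-Analysis.Kronecker_Approximation_Theorem"
begin


definition bb :: real where "bb = (3 - sqrt 5) / 2"

lemma sq5_mod: "(m::nat)^2 mod 5 = 0 \<Longrightarrow> m mod 5 = 0"
proof -
  assume a: "m^2 mod 5 = 0"
  have e: "m^2 mod 5 = (m mod 5)^2 mod 5" by (simp add: power_mod)
  have "m mod 5 \<in> {0,1,2,3,4}" by auto
  then show ?thesis using a e by (auto simp: power2_eq_square)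
qed

lemma sqrt5_irr: "sqrt 5 \<notin> \<rat>"
proof
  assume "sqrt 5 \<in> \<rat>"
  then obtain m n :: nat where n0: "n \<noteq> 0" and e: "\<bar>sqrt 5\<bar> = real m / real n" and cp: "coprime m n"
    by (rule Rats_abs_nat_div_natE)
  have "sqrt 5 * real n = real m" using e n0 by (simp add: field_simps)
  then have "(sqrt 5 * real n)^2 = (real m)^2" by simp
  then have "5 * (real n)^2 = (real m)^2" by (simp add: power_mult_distrib)
  then have "real (5 * n^2) = real (m^2)" by simp
  then have eq: "5 * n^2 = m^2" by (simp only: of_nat_eq_iff)
  then have "m mod 5 = 0" using sq5_mod by (metis mod_mult_self1_is_0)
  then obtain r where r: "m = 5*r" by auto
  then have "n^2 = 5 * r^2" using eq by (simp add: power_mult_distrib power2_eq_square)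
  then have "n mod 5 = 0" using sq5_mod by (metis mod_mult_self1_is_0)
  then have "5 dvd m" "5 dvd n" using r by auto
  then show False using cp coprime_common_divisor_nat by fastforce
qed

lemma s5: "sqrt 5 * sqrt 5 = 5" by simp
lemma s5b: "2 < sqrt 5" "sqrt 5 < 3"
proof -
  show "2 < sqrt 5" by (rule real_less_rsqrt) simp
  show "sqrt 5 < 3" by (rule real_less_lsqrt) simp_all
qed

lemma bb_sq: "bb * bb = 3 * bb - 1"
  unfolding bb_def by (simp add: field_simps s5)

lemma bb_pos: "0 < bb" and bb_half: "bb < 1/2"
  using s5b unfolding bb_def by auto

lemma bb_irr: "bb \<notin> \<rat>"
proof
  assume "bb \<in> \<rat>"
  then have "3 - 2 * bb \<in> \<rat>" by (simp add: Rats_diff Rats_mult)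
  moreover have "3 - 2 * bb = sqrt 5" unfolding bb_def by (simp add: field_simps)
  ultimately show False using sqrt5_irr by simp
qed

lemma mult_notint: assumes "\<gamma> \<notin> \<rat>" "n \<ge> 1" shows "real n * \<gamma> \<notin> \<int>"
proof
  assume "real n * \<gamma> \<in> \<int>"
  then obtain m where "real n * \<gamma> = of_int m" by (auto elim: Ints_cases)
  then have "\<gamma> = of_int m / real n" using assms(2) by (simp add: field_simps)
  then have "\<gamma> \<in> \<rat>" by simp
  then show False using assms by simp
qed

lemma bb_notint: "n \<ge> 1 \<Longrightarrow> real n * bb \<notin> \<int>"
  using mult_notint bb_irr by blast

definition cw :: "nat \<Rightarrow> nat" where
  "cw n = (if frac (real (n+1) * bb) \<ge> 1 - bb then 1 else 0)"

fun hh :: "nat \<Rightarrow> nat" where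
  "hh 0 = 0"
| "hh (Suc j) = hh j + (if cw j = 0 then 2 else 1)"

lemma frac_bb: "frac bb = bb" using bb_pos bb_half by (simp add: frac_eq)

lemma tpos: "0 < frac (real (j+1) * bb)"
  using bb_notint[of "j+1"] by simp

lemma frac_plus_bb: "frac (x + bb) = (if frac x + bb < 1 then frac x + bb else frac x + bb - 1)"
  using frac_add[of x bb] frac_bb by simp

lemma hh_frac: "frac (real (hh j + 1) * bb) = (1 - frac (real (j+1) * bb)) * (1 - bb)"
proof (induction j)
  case 0
  then show ?case using frac_bb bb_sq by (simp add: algebra_simps)
next
  case (Suc j)
  define t where "t = frac (real (j+1) * bb)"
  define X where "X = real (hh j + 1) * bb"
  have t01: "0 < t" "t < 1" using tpos[of j] frac_lt_1 unfolding t_def by auto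
  have tS: "frac (real (Suc j+1) * bb) = (if t + bb < 1 then t + bb else t + bb - 1)"
  proof -
    have "real (Suc j + 1) * bb = real (j+1) * bb + bb" by (simp add: algebra_simps)
    then show ?thesis unfolding t_def using frac_plus_bb by simp
  qed
  have fX: "frac X = (1 - t) * (1 - bb)" using Suc unfolding X_def t_def .
  have dec: "X = of_int \<lfloor>X\<rfloor> + frac X" by (simp add: frac_def)
  show ?case
  proof (cases "t + bb < 1")
    case True
    then have c0: "cw j = 0" unfolding cw_def t_def by auto
    have "real (hh (Suc j) + 1) * bb = X + 2 * bb" using c0 unfolding X_def by (simp add: algebra_simps)
    also have "\<dots> = (of_int \<lfloor>X\<rfloor> + 1) + (1 - t - bb) * (1 - bb)"
      using dec fX bb_sq by (simp add: algebra_simps)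
    finally have "frac (real (hh (Suc j) + 1) * bb) = frac ((1 - t - bb) * (1 - bb))"
      by (metis frac_add_int_left Ints_add Ints_of_int Ints_1)
    also have "\<dots> = (1 - t - bb) * (1 - bb)"
    proof (intro frac_eq_id)
      have a: "0 \<le> 1 - t - bb" "1 - t - bb \<le> 1" using True t01 bb_pos by auto
      have b: "0 < 1 - bb" "1 - bb < 1" using bb_pos bb_half by auto
      have d: "(1 - t - bb) * (1 - bb) \<le> 1 * (1 - bb)" using a b by (intro mult_right_mono) auto
      have c: "(1 - t - bb) * (1 - bb) < 1" using le_less_trans[OF d] b(2) by simp
      have "0 \<le> (1 - t - bb) * (1 - bb)" using a b by simp
      then show "(1 - t - bb) * (1 - bb) \<in> {0..<1}" using c by simp
    qed
    finally show ?thesis using tS True by simp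
  next
    case False
    then have c0: "cw j = 1" unfolding cw_def t_def by auto
    have "real (hh (Suc j) + 1) * bb = X + bb" using c0 unfolding X_def by (simp add: algebra_simps)
    also have "\<dots> = of_int \<lfloor>X\<rfloor> + (2 - t - bb) * (1 - bb)"
      using dec fX bb_sq by (simp add: algebra_simps)
    finally have "frac (real (hh (Suc j) + 1) * bb) = frac ((2 - t - bb) * (1 - bb))"
      by (metis frac_add_int_left Ints_of_int)
    also have "\<dots> = (2 - t - bb) * (1 - bb)"
    proof (intro frac_eq_id)
      have a: "0 \<le> 2 - t - bb" "2 - t - bb \<le> 1" using False t01 bb_pos bb_half by auto
      have b: "0 < 1 - bb" "1 - bb < 1" using bb_pos bb_half by auto
      have d: "(2 - t - bb) * (1 - bb) \<le> 1 * (1 - bb)" using a b by (intro mult_right_mono) auto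
      have c: "(2 - t - bb) * (1 - bb) < 1" using le_less_trans[OF d] b(2) by simp
      have "0 \<le> (2 - t - bb) * (1 - bb)" using a b by simp
      then show "(2 - t - bb) * (1 - bb) \<in> {0..<1}" using c by simp
    qed
    finally show ?thesis using tS False by simp
  qed
qed

lemma cw_01: "cw n = 0 \<or> cw n = 1" unfolding cw_def by auto

lemma cw_h: "cw (hh j) = 0"
proof -
  have "0 < frac (real (j+1) * bb)" by (rule tpos)
  then have "(1 - frac (real (j+1) * bb)) * (1 - bb) < 1 * (1 - bb)"
    using bb_half by (intro mult_strict_right_mono) auto
  then show ?thesis unfolding cw_def hh_frac by simp
qed

lemma cw_h1: assumes "cw j = 0" shows "cw (hh j + 1) = 1"
proof -
  define t where "t = frac (real (j+1) * bb)"
  have t: "t < 1 - bb" using assms unfolding cw_def t_def by (auto split: if_splits)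
  have u: "frac (real (hh j + 1) * bb) = (1 - t) * (1 - bb)" unfolding t_def by (rule hh_frac)
  have t0: "0 < t" unfolding t_def by (rule tpos)
  have ul: "(1 - t) * (1 - bb) < 1 * (1 - bb)"
    using t0 bb_half by (intro mult_strict_right_mono) auto
  have "frac (real (hh j + 1 + 1) * bb) = frac (real (hh j + 1) * bb + bb)"
    by (simp add: algebra_simps)
  also have "\<dots> = (1 - t) * (1 - bb) + bb" using frac_plus_bb u ul by simp
  finally have e: "frac (real (hh j + 1 + 1) * bb) = (1 - t) * (1 - bb) + bb" .
  have "bb * (1 - bb) < (1 - t) * (1 - bb)"
    using t bb_half by (intro mult_strict_right_mono) auto
  then have "1 - 2 * bb < (1 - t) * (1 - bb)" using bb_sq by (simp add: algebra_simps)
  then show ?thesis unfolding cw_def e by auto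
qed

lemma subst_prefix:
  "(\<forall>t<length w. w!t = cw (j+t)) \<Longrightarrow> (\<forall>i<length (fib_subst w). fib_subst w ! i = cw (hh j + i))"
proof (induction w arbitrary: j)
  case Nil
  then show ?case by simp
next
  case (Cons a w)
  have a: "a = cw j" using Cons.prems by (metis add_0_right length_Cons nth_Cons_0 zero_less_Suc)
  have IH: "\<forall>i<length (fib_subst w). fib_subst w ! i = cw (hh (Suc j) + i)"
    using Cons.prems by (intro Cons.IH) auto
  show ?case
  proof (intro allI impI)
    fix i assume i: "i < length (fib_subst (a # w))"
    show "fib_subst (a # w) ! i = cw (hh j + i)"
    proof (cases "a = 0")
      case True
      then have hs: "hh (Suc j) = hh j + 2" using a by simp
      consider "i = 0" | "i = 1" | "i \<ge> 2" by linarith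
      then show ?thesis
      proof cases
        case 1 then show ?thesis using True cw_h by simp
      next
        case 2 then show ?thesis using True cw_h1 a by simp
      next
        case 3
        then have "fib_subst (a # w) ! i = fib_subst w ! (i - 2)" using True by (simp add: nth_append numeral_2_eq_2)
        moreover have "i - 2 < length (fib_subst w)" using i 3 True by simp
        ultimately show ?thesis using IH hs 3 by simp
      qed
    next
      case False
      then have hs: "hh (Suc j) = hh j + 1" using a cw_01[of j] by auto
      show ?thesis
      proof (cases "i = 0")
        case True then show ?thesis using False cw_h by simp
      next
        case i0: False
        then have "fib_subst (a # w) ! i = fib_subst w ! (i - 1)" using False by (simp add: nth_append)
        moreover have "i - 1 < length (fib_subst w)" using i i0 False by simp
        ultimately show ?thesis using IH hs i0 by simp
      qed
    qed
  qed
qed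

lemma subst_len: "length (fib_subst w) \<ge> length w"
  by (induction w) auto

lemma subst_hd: "w \<noteq> [] \<Longrightarrow> fib_subst w \<noteq> [] \<and> hd (fib_subst w) = 0"
  by (cases w) auto

lemma subst_len2: "w \<noteq> [] \<Longrightarrow> hd w = 0 \<Longrightarrow> length (fib_subst w) \<ge> length w + 1"
  using subst_len[of "tl w"] by (cases w) auto

lemma iter_props: "(fib_subst ^^ n) [0] \<noteq> [] \<and> hd ((fib_subst ^^ n) [0]) = 0
   \<and> length ((fib_subst ^^ n) [0]) \<ge> n + 1
   \<and> (\<forall>i<length ((fib_subst ^^ n) [0]). (fib_subst ^^ n) [0] ! i = cw i)"
proof (induction n)
  case 0
  have "cw 0 = 0" unfolding cw_def using bb_half frac_bb by simp
  then show ?case by simp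
next
  case (Suc n)
  let ?w = "(fib_subst ^^ n) [0]"
  have p: "\<forall>t<length ?w. ?w!t = cw (0+t)" using Suc by simp
  show ?case using Suc subst_hd[of ?w] subst_len2[of ?w] subst_prefix[OF p] by simp
qed

lemma fib_word_cw: "fib_word n = cw n"
  unfolding fib_word_def using iter_props[of n] by simp

lemma y_ne: "frac (real (k+1) * bb) \<noteq> 1 - bb"
proof
  assume a: "frac (real (k+1) * bb) = 1 - bb"
  have "frac (real (k+2) * bb) = frac (real (k+1) * bb + bb)" by (simp add: algebra_simps)
  also have "\<dots> = 0" using frac_plus_bb a by simp
  finally show False using bb_notint[of "k+2"] by simp
qed

lemma occ_delta: "\<exists>\<delta>>0. \<forall>n. (frac (real n * bb) < \<delta> \<or> frac (real n * bb) > 1 - \<delta>) \<longrightarrow> (\<forall>i<k. cw (n+i) = cw i)"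
proof (induction k)
  case 0
  then show ?case by (intro exI[of _ 1]) auto
next
  case (Suc k)
  then obtain \<delta> where d: "\<delta> > 0" "\<forall>n. (frac (real n * bb) < \<delta> \<or> frac (real n * bb) > 1 - \<delta>) \<longrightarrow> (\<forall>i<k. cw (n+i) = cw i)"
    by blast
  define y where "y = frac (real (k+1) * bb)"
  have y: "0 < y" "y < 1" "y \<noteq> 1 - bb" unfolding y_def using tpos frac_lt_1 y_ne by auto
  define d' where "d' = min \<delta> (min (1 - y) (min y \<bar>y - (1 - bb)\<bar>))"
  have d'0: "d' > 0" unfolding d'_def using y d by auto
  show ?case
  proof (intro exI[of _ d'] conjI allI impI d'0)
    fix n i assume n: "frac (real n * bb) < d' \<or> 1 - d' < frac (real n * bb)" and i: "i < Suc k"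
    show "cw (n+i) = cw i"
    proof (cases "i < k")
      case True then show ?thesis using d n unfolding d'_def by auto
    next
      case False
      then have ik: "i = k" using i by simp
      define e where "e = frac (real n * bb)"
      have e: "0 \<le> e" "e < 1" unfolding e_def by (auto simp: frac_lt_1)
      have "frac (real (n+k+1) * bb) = frac (real n * bb + real (k+1) * bb)" by (simp add: algebra_simps)
      also have "\<dots> = (if e + y < 1 then e + y else e + y - 1)" unfolding e_def y_def by (rule frac_add)
      finally have f: "frac (real (n+k+1) * bb) = (if e + y < 1 then e + y else e + y - 1)" .
      have n': "e < d' \<or> 1 - d' < e" using n unfolding e_def .
      have dd: "d' \<le> 1 - y" "d' \<le> y" "d' \<le> \<bar>y - (1 - bb)\<bar>" unfolding d'_def by auto
      have "(1 - bb \<le> (if e + y < 1 then e + y else e + y - 1)) = (1 - bb \<le> y)"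
        using n' dd e y by (auto split: if_splits)
      then show ?thesis unfolding cw_def ik f using y_def by (simp add: add.assoc)
    qed
  qed
qed

lemma ipstar_gen:
  assumes d: "\<delta> > 0" and A: "\<forall>n. (frac (real n * bb) < \<delta> \<or> frac (real n * bb) > 1 - \<delta>) \<longrightarrow> n \<in> A"
  shows "IP_star_set A"
  unfolding IP_star_set_def
proof (intro allI impI)
  fix B assume "IP_set B"
  then obtain x :: "nat \<Rightarrow> nat" where x: "strict_mono x" "\<forall>F. finite F \<and> F \<noteq> {} \<longrightarrow> sum x F \<in> B"
    unfolding IP_set_def by blast
  obtain N :: nat where N: "N > 0" "1 / real N < \<delta>"
    by (metis d gr_zeroI inverse_eq_divide real_arch_inverse)
  define S where "S j = sum x {..<j}" for j
  define fr where "fr j = frac (real (S j) * bb)" for j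
  define bin where "bin j = nat \<lfloor>real N * fr j\<rfloor>" for j
  have binN: "bin ` {..N} \<subseteq> {..<N}"
  proof
    fix b assume "b \<in> bin ` {..N}"
    then obtain j where b: "b = bin j" by auto
    have "real N * fr j < real N * 1" using N frac_lt_1 unfolding fr_def by (intro mult_strict_left_mono) auto
    then have "\<lfloor>real N * fr j\<rfloor> < int N" by (simp add: floor_less_iff)
    then show "b \<in> {..<N}" unfolding b bin_def using N by (simp add: nat_less_iff del: floor_less_iff)
  qed
  have "card (bin ` {..N}) \<le> card {..<N}" using binN by (intro card_mono) auto
  then have "card (bin ` {..N}) < card {..N}" by simp
  then have "\<not> inj_on bin {..N}" by (rule pigeonhole)
  then obtain i j where ij: "i \<in> {..N}" "j \<in> {..N}" "i \<noteq> j" "bin i = bin j"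
    unfolding inj_on_def by blast
  obtain a b where ab: "a < b" "bin a = bin b"
    using ij by (metis linorder_neqE_nat)
  have close: "\<bar>fr b - fr a\<bar> < 1 / real N"
  proof -
    have fa: "0 \<le> fr a" "0 \<le> fr b" unfolding fr_def by auto
    have "0 \<le> \<lfloor>real N * fr a\<rfloor>" "0 \<le> \<lfloor>real N * fr b\<rfloor>" using fa by simp_all
    then have "\<lfloor>real N * fr a\<rfloor> = \<lfloor>real N * fr b\<rfloor>" using ab(2) unfolding bin_def by (simp add: eq_nat_nat_iff)
    then have "\<bar>real N * fr b - real N * fr a\<bar> < 1" by linarith
    then have "real N * \<bar>fr b - fr a\<bar> < 1" by (simp add: abs_mult right_diff_distrib[symmetric])
    then show ?thesis using N by (simp add: field_simps)
  qed
  define F where "F = {a..<b}"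
  have SF: "S b = S a + sum x F"
    unfolding S_def F_def using ab(1)
    by (metis le0 lessThan_atLeast0 less_imp_le_nat sum.atLeastLessThan_concat)
  have "real (sum x F) * bb = real (S b) * bb - real (S a) * bb" using SF by (simp add: algebra_simps)
  then have fe: "frac (real (sum x F) * bb) = frac (real (S b) * bb - real (S a) * bb)" by simp
  have "frac (real (sum x F) * bb) < \<delta> \<or> frac (real (sum x F) * bb) > 1 - \<delta>"
  proof (cases "fr a \<le> fr b")
    case True
    then have "frac (real (sum x F) * bb) = fr b - fr a" unfolding fe fr_def by (rule frac_diff_pos)
    then show ?thesis using close N True by auto
  next
    case False
    then have "frac (real (sum x F) * bb) = fr b + 1 - fr a" unfolding fe fr_def
      by (intro frac_diff_neg) simp
    then show ?thesis using close N False by auto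
  qed
  then have "sum x F \<in> A" using A by blast
  moreover have "sum x F \<in> B" using x ab unfolding F_def by auto
  ultimately show "A \<inter> B \<noteq> {}" by blast
qed



abbreviation uf :: "nat set set \<Rightarrow> bool" where "uf p \<equiv> is_ultrafilter p"

lemma uf_UNIV: "uf p \<Longrightarrow> UNIV \<in> p" unfolding is_ultrafilter_def by blast
lemma uf_empty: "uf p \<Longrightarrow> {} \<notin> p" unfolding is_ultrafilter_def by blast
lemma uf_mono: "uf p \<Longrightarrow> A \<in> p \<Longrightarrow> A \<subseteq> B \<Longrightarrow> B \<in> p" unfolding is_ultrafilter_def by blast
lemma uf_Int: "uf p \<Longrightarrow> (A \<inter> B \<in> p) = (A \<in> p \<and> B \<in> p)"
  unfolding is_ultrafilter_def by (meson inf_sup_ord(1) inf_sup_ord(2))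
lemma uf_compl: "uf p \<Longrightarrow> (- A \<in> p) = (A \<notin> p)"
  unfolding is_ultrafilter_def by (metis Compl_disjoint)
lemma uf_ne: "uf p \<Longrightarrow> A \<in> p \<Longrightarrow> A \<noteq> {}" using uf_empty by blast
lemma uf_Un: "uf p \<Longrightarrow> A \<union> B \<in> p \<Longrightarrow> A \<in> p \<or> B \<in> p"
proof (rule ccontr)
  assume u: "uf p" "A \<union> B \<in> p" "\<not> (A \<in> p \<or> B \<in> p)"
  then have "- A \<inter> - B \<in> p" using uf_compl uf_Int by blast
  then have "(A \<union> B) \<inter> (- A \<inter> - B) \<in> p" using u uf_Int by blast
  then show False using u uf_empty by (metis Compl_Un Int_commute Compl_disjoint)
qed
lemma uf_sub_eq: "uf p \<Longrightarrow> uf q \<Longrightarrow> p \<subseteq> q \<Longrightarrow> p = q"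
proof (rule ccontr)
  assume a: "uf p" "uf q" "p \<subseteq> q" "p \<noteq> q"
  then obtain A where "A \<in> q" "A \<notin> p" by blast
  then have "- A \<in> q" using a uf_compl by blast
  then show False using \<open>A \<in> q\<close> a uf_compl by blast
qed

lemma uf_finite: assumes "uf p" "\<forall>n. {n} \<notin> p" "finite F" shows "F \<notin> p"
  using assms(3)
proof (induction F rule: finite_induct)
  case empty then show ?case using assms uf_empty by blast
next
  case (insert a F)
  then show ?case using uf_Un[OF assms(1), of "{a}" F] assms(2) by auto
qed

lemma uf_plus_mem: "A \<in> uf_plus p q \<longleftrightarrow> {n. {m. m + n \<in> A} \<in> p} \<in> q"
  unfolding uf_plus_def by simp

lemma uf_plus_uf: assumes p: "uf p" and q: "uf q" shows "uf (uf_plus p q)"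
proof -
  have U: "UNIV \<in> uf_plus p q" unfolding uf_plus_mem using p q uf_UNIV by simp
  have E: "{} \<notin> uf_plus p q" unfolding uf_plus_mem using p q uf_empty by simp
  have M: "\<forall>A B. A \<in> uf_plus p q \<and> A \<subseteq> B \<longrightarrow> B \<in> uf_plus p q"
  proof (intro allI impI)
    fix A B assume a: "A \<in> uf_plus p q \<and> A \<subseteq> B"
    have "{n. {m. m + n \<in> A} \<in> p} \<subseteq> {n. {m. m + n \<in> B} \<in> p}"
    proof
      fix n assume "n \<in> {n. {m. m + n \<in> A} \<in> p}"
      then have "{m. m + n \<in> A} \<in> p" by simp
      moreover have "{m. m + n \<in> A} \<subseteq> {m. m + n \<in> B}" using a by auto
      ultimately show "n \<in> {n. {m. m + n \<in> B} \<in> p}" using uf_mono[OF p] by blast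
    qed
    then show "B \<in> uf_plus p q" using a q uf_mono unfolding uf_plus_mem by blast
  qed
  have I: "\<forall>A B. A \<in> uf_plus p q \<and> B \<in> uf_plus p q \<longrightarrow> A \<inter> B \<in> uf_plus p q"
  proof (intro allI impI)
    fix A B assume a: "A \<in> uf_plus p q \<and> B \<in> uf_plus p q"
    have "{n. {m. m + n \<in> A \<inter> B} \<in> p} = {n. {m. m + n \<in> A} \<in> p} \<inter> {n. {m. m + n \<in> B} \<in> p}"
    proof -
      have "\<And>n. {m. m + n \<in> A \<inter> B} = {m. m + n \<in> A} \<inter> {m. m + n \<in> B}" by auto
      then show ?thesis using uf_Int[OF p] by auto
    qed
    then show "A \<inter> B \<in> uf_plus p q" using a uf_Int[OF q] unfolding uf_plus_mem by simp
  qed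
  have C: "\<forall>A. A \<in> uf_plus p q \<or> - A \<in> uf_plus p q"
  proof
    fix A
    have "{n. {m. m + n \<in> - A} \<in> p} = - {n. {m. m + n \<in> A} \<in> p}"
    proof -
      have "\<And>n. {m. m + n \<in> - A} = - {m. m + n \<in> A}" by auto
      then show ?thesis using uf_compl[OF p] by auto
    qed
    then show "A \<in> uf_plus p q \<or> - A \<in> uf_plus p q" using uf_compl[OF q] unfolding uf_plus_mem by auto
  qed
  show ?thesis unfolding is_ultrafilter_def using U E M I C by blast
qed

lemma uf_plus_assoc: "uf_plus (uf_plus p q) r = uf_plus p (uf_plus q r)"
  unfolding uf_plus_def by (simp add: add.assoc add.commute add.left_commute)

lemma betaN_iff: "p \<in> betaN \<longleftrightarrow> uf p" unfolding betaN_def by simp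

lemma uf_principal: "uf {A. n \<in> A}"
  unfolding is_ultrafilter_def by auto

definition closedb :: "nat set set set \<Rightarrow> bool" where
  "closedb C \<longleftrightarrow> C \<subseteq> betaN \<and> (\<forall>p. uf p \<and> (\<forall>A\<in>p. \<exists>q\<in>C. A \<in> q) \<longrightarrow> p \<in> C)"

lemma uf_exists:
  assumes F: "F \<noteq> {}" "{} \<notin> F" "\<forall>A\<in>F. \<forall>B\<in>F. \<exists>C\<in>F. C \<subseteq> A \<inter> B"
  shows "\<exists>p. uf p \<and> F \<subseteq> p"
proof -
  define Z where "Z = {G. F \<subseteq> G \<and> {} \<notin> G \<and> (\<forall>A\<in>G. \<forall>B. A \<subseteq> B \<longrightarrow> B \<in> G) \<and> (\<forall>A\<in>G. \<forall>B\<in>G. A \<inter> B \<in> G)}"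
  define G0 where "G0 = {B. \<exists>A\<in>F. A \<subseteq> B}"
  have G0: "G0 \<in> Z"
  proof -
    have "\<forall>A\<in>G0. \<forall>B\<in>G0. A \<inter> B \<in> G0"
    proof (intro ballI)
      fix A B assume "A \<in> G0" "B \<in> G0"
      then obtain A' B' where "A' \<in> F" "A' \<subseteq> A" "B' \<in> F" "B' \<subseteq> B" unfolding G0_def by blast
      then obtain C where "C \<in> F" "C \<subseteq> A' \<inter> B'" using F(3) by blast
      then show "A \<inter> B \<in> G0" unfolding G0_def using \<open>A' \<subseteq> A\<close> \<open>B' \<subseteq> B\<close> by blast
    qed
    moreover have "{} \<notin> G0"
    proof
      assume "{} \<in> G0"
      then obtain A where "A \<in> F" "A \<subseteq> {}" unfolding G0_def by blast
      then show False using F(2) by (metis subset_empty)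
    qed
    moreover have "F \<subseteq> G0" unfolding G0_def by blast
    moreover have "\<forall>A\<in>G0. \<forall>B. A \<subseteq> B \<longrightarrow> B \<in> G0" unfolding G0_def by blast
    ultimately show ?thesis unfolding Z_def by simp
  qed
  have "\<forall>C\<in>chains Z. \<exists>U\<in>Z. \<forall>X\<in>C. X \<subseteq> U"
  proof
    fix C assume C: "C \<in> chains Z"
    show "\<exists>U\<in>Z. \<forall>X\<in>C. X \<subseteq> U"
    proof (cases "C = {}")
      case True then show ?thesis using G0 by blast
    next
      case False
      have CZ: "C \<subseteq> Z" and ch: "\<forall>X\<in>C. \<forall>Y\<in>C. X \<subseteq> Y \<or> Y \<subseteq> X"
        using C unfolding chains_def chain_subset_def by auto
      have "\<Union>C \<in> Z"
      proof -
        have "F \<subseteq> \<Union>C" using False CZ unfolding Z_def by blast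
        moreover have "{} \<notin> \<Union>C" using CZ unfolding Z_def by blast
        moreover have "\<forall>A\<in>\<Union>C. \<forall>B. A \<subseteq> B \<longrightarrow> B \<in> \<Union>C" using CZ unfolding Z_def by blast
        moreover have "\<forall>A\<in>\<Union>C. \<forall>B\<in>\<Union>C. A \<inter> B \<in> \<Union>C"
        proof (intro ballI)
          fix A B assume "A \<in> \<Union>C" "B \<in> \<Union>C"
          then obtain X Y where "X \<in> C" "Y \<in> C" "A \<in> X" "B \<in> Y" by blast
          moreover have "\<forall>W\<in>C. \<forall>A\<in>W. \<forall>B\<in>W. A \<inter> B \<in> W" using CZ unfolding Z_def by blast
          ultimately show "A \<inter> B \<in> \<Union>C" using ch
            by (metis UnionI subsetD)
        qed
        ultimately show ?thesis unfolding Z_def by blast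
      qed
      then show ?thesis by blast
    qed
  qed
  then obtain M where M: "M \<in> Z" "\<forall>X\<in>Z. M \<subseteq> X \<longrightarrow> X = M" by (metis Zorn_Lemma2)
  have Mf: "F \<subseteq> M" "{} \<notin> M" "\<forall>A\<in>M. \<forall>B. A \<subseteq> B \<longrightarrow> B \<in> M" "\<forall>A\<in>M. \<forall>B\<in>M. A \<inter> B \<in> M"
    using M(1) unfolding Z_def by auto
  have MU: "UNIV \<in> M" using Mf(1,3) F(1) by blast
  have "\<forall>A. A \<in> M \<or> - A \<in> M"
  proof (rule ccontr)
    assume "\<not> (\<forall>A. A \<in> M \<or> - A \<in> M)"
    then obtain A where A: "A \<notin> M" "- A \<notin> M" by blast
    have meet: "\<forall>B\<in>M. B \<inter> A \<noteq> {}"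
    proof
      fix B assume "B \<in> M"
      show "B \<inter> A \<noteq> {}"
      proof
        assume "B \<inter> A = {}"
        then have "B \<subseteq> - A" by blast
        then show False using \<open>B \<in> M\<close> A Mf(3) by blast
      qed
    qed
    define M' where "M' = {X. \<exists>B\<in>M. B \<inter> A \<subseteq> X}"
    have "M' \<in> Z"
    proof -
      have "F \<subseteq> M'" using Mf(1) unfolding M'_def by blast
      moreover have "{} \<notin> M'"
      proof
        assume "{} \<in> M'"
        then obtain B where "B \<in> M" "B \<inter> A \<subseteq> {}" unfolding M'_def by blast
        then show False using meet by (metis subset_empty)
      qed
      moreover have "\<forall>X\<in>M'. \<forall>Y. X \<subseteq> Y \<longrightarrow> Y \<in> M'" unfolding M'_def by blast
      moreover have "\<forall>X\<in>M'. \<forall>Y\<in>M'. X \<inter> Y \<in> M'"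
      proof (intro ballI)
        fix X Y assume "X \<in> M'" "Y \<in> M'"
        then obtain B1 B2 where "B1 \<in> M" "B2 \<in> M" "B1 \<inter> A \<subseteq> X" "B2 \<inter> A \<subseteq> Y" unfolding M'_def by blast
        moreover then have "B1 \<inter> B2 \<in> M" using Mf(4) by blast
        moreover have "(B1 \<inter> B2) \<inter> A \<subseteq> X \<inter> Y" using calculation by blast
        ultimately show "X \<inter> Y \<in> M'" unfolding M'_def by blast
      qed
      ultimately show ?thesis unfolding Z_def by simp
    qed
    moreover have "M \<subseteq> M'" unfolding M'_def by blast
    ultimately have "M' = M" using M(2) by blast
    moreover have "A \<in> M'" using MU unfolding M'_def by blast
    ultimately show False using A by blast
  qed
  then have "uf M" unfolding is_ultrafilter_def using Mf(2-4) MU by meson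
  then show ?thesis using Mf(1) by blast
qed

lemma closedb_sub: "closedb C \<Longrightarrow> p \<in> C \<Longrightarrow> uf p"
  unfolding closedb_def betaN_def by blast

lemma compact_dir:
  assumes ne: "\<C> \<noteq> {}" and cl: "\<forall>C\<in>\<C>. closedb C \<and> C \<noteq> {}"
    and dir: "\<forall>C1\<in>\<C>. \<forall>C2\<in>\<C>. \<exists>C3\<in>\<C>. C3 \<subseteq> C1 \<inter> C2"
  shows "\<exists>p. uf p \<and> (\<forall>C\<in>\<C>. p \<in> C)"
proof -
  have ufC: "uf q" if "C \<in> \<C>" "q \<in> C" for C q
  proof -
    have "closedb C" using cl that(1) by simp
    then show ?thesis using closedb_sub that(2) by simp
  qed
  define F where "F = {A. \<exists>C\<in>\<C>. \<forall>q\<in>C. A \<in> q}"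
  obtain C0 where C0: "C0 \<in> \<C>" using ne by auto
  have "\<forall>q\<in>C0. UNIV \<in> q" using C0 ufC uf_UNIV by simp
  then have "UNIV \<in> F" unfolding F_def using C0 by auto
  then have F1: "F \<noteq> {}" by auto
  have F2: "{} \<notin> F"
  proof
    assume "{} \<in> F"
    then obtain C where C: "C \<in> \<C>" "\<forall>q\<in>C. {} \<in> q" unfolding F_def by auto
    moreover obtain q where "q \<in> C" using cl C(1) by auto
    ultimately show False using ufC uf_empty by metis
  qed
  have F3: "\<forall>A\<in>F. \<forall>B\<in>F. \<exists>C\<in>F. C \<subseteq> A \<inter> B"
  proof (intro ballI)
    fix A B assume "A \<in> F" "B \<in> F"
    then obtain C1 C2 where c: "C1 \<in> \<C>" "\<forall>q\<in>C1. A \<in> q" "C2 \<in> \<C>" "\<forall>q\<in>C2. B \<in> q" unfolding F_def by auto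
    then obtain C3 where c3: "C3 \<in> \<C>" "C3 \<subseteq> C1 \<inter> C2" using dir by meson
    have "\<forall>q\<in>C3. A \<inter> B \<in> q"
    proof
      fix q assume q3: "q \<in> C3"
      then have q: "q \<in> C1" "q \<in> C2" using c3 by auto
      then have ab: "A \<in> q" "B \<in> q" using c by auto
      have "uf q" using ufC c3(1) q3 by simp
      then show "A \<inter> B \<in> q" using uf_Int[of q A B] ab by simp
    qed
    then have "A \<inter> B \<in> F" unfolding F_def using c3(1) by auto
    then show "\<exists>C\<in>F. C \<subseteq> A \<inter> B" by auto
  qed
  obtain p where p: "uf p" "F \<subseteq> p" using uf_exists[OF F1 F2 F3] by auto
  have "p \<in> C" if C: "C \<in> \<C>" for C
  proof -
    have "\<forall>A\<in>p. \<exists>q\<in>C. A \<in> q"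
    proof (rule ccontr)
      assume "\<not> (\<forall>A\<in>p. \<exists>q\<in>C. A \<in> q)"
      then obtain A where A: "A \<in> p" "\<forall>q\<in>C. A \<notin> q" by auto
      have "\<forall>q\<in>C. - A \<in> q"
      proof
        fix q assume qC: "q \<in> C"
        have "uf q" using ufC C qC by simp
        then show "- A \<in> q" using A(2) qC uf_compl[of q A] by simp
      qed
      then have "- A \<in> F" unfolding F_def using C by auto
      then have "- A \<in> p" using p(2) by auto
      then show False using A(1) uf_compl[OF p(1), of A] by simp
    qed
    moreover have "closedb C" using C cl by simp
    ultimately show ?thesis using p(1) unfolding closedb_def by simp
  qed
  then show ?thesis using p(1) by auto
qed

lemma closedb_basic: "closedb {p \<in> betaN. \<forall>A\<in>F. A \<in> p}"
  unfolding closedb_def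
proof (intro conjI allI impI)
  show "{p \<in> betaN. \<forall>A\<in>F. A \<in> p} \<subseteq> betaN" by auto
  fix p assume a: "uf p \<and> (\<forall>A\<in>p. \<exists>q\<in>{p \<in> betaN. \<forall>A\<in>F. A \<in> p}. A \<in> q)"
  have "A \<in> p" if AF: "A \<in> F" for A
  proof (rule ccontr)
    assume "A \<notin> p"
    then have "- A \<in> p" using a uf_compl[of p A] by simp
    then obtain q where q: "q \<in> betaN" "\<forall>A\<in>F. A \<in> q" "- A \<in> q" using a by auto
    then have "uf q" using betaN_iff by simp
    then show False using q(2,3) AF uf_compl[of q A] by simp
  qed
  then show "p \<in> {p \<in> betaN. \<forall>A\<in>F. A \<in> p}" using a betaN_iff by simp
qed

lemma closedb_betaN: "closedb betaN"
  using closedb_basic[of "{}"] by simp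

lemma closedb_Inter: assumes "\<C> \<noteq> {}" "\<forall>C\<in>\<C>. closedb C" shows "closedb (\<Inter>\<C>)"
  unfolding closedb_def
proof (intro conjI allI impI)
  obtain C where "C \<in> \<C>" using assms(1) by auto
  then have "C \<subseteq> betaN" using assms(2) unfolding closedb_def by simp
  then show "\<Inter>\<C> \<subseteq> betaN" using \<open>C \<in> \<C>\<close> by auto
  fix p assume a: "uf p \<and> (\<forall>A\<in>p. \<exists>q\<in>\<Inter>\<C>. A \<in> q)"
  show "p \<in> \<Inter>\<C>"
  proof
    fix C assume C: "C \<in> \<C>"
    then have "\<forall>A\<in>p. \<exists>q\<in>C. A \<in> q" using a by blast
    moreover have "closedb C" using C assms(2) by simp
    ultimately show "p \<in> C" using a unfolding closedb_def by simp
  qed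
qed

lemma closedb_Int: "closedb A \<Longrightarrow> closedb B \<Longrightarrow> closedb (A \<inter> B)"
  using closedb_Inter[of "{A, B}"] by simp

lemma closedb_image:
  assumes C: "closedb C" and x: "uf x"
  shows "closedb (uf_plus x ` C)"
  unfolding closedb_def
proof (intro conjI allI impI)
  show "uf_plus x ` C \<subseteq> betaN"
  proof
    fix r assume "r \<in> uf_plus x ` C"
    then obtain c where "c \<in> C" "r = uf_plus x c" by auto
    then show "r \<in> betaN" using C closedb_sub uf_plus_uf[OF x] betaN_iff by simp
  qed
  fix r assume a: "uf r \<and> (\<forall>D\<in>r. \<exists>q\<in>uf_plus x ` C. D \<in> q)"
  define E where "E D = {n. {m. m + n \<in> D} \<in> x}" for D
  have memE: "D \<in> uf_plus x a \<longleftrightarrow> E D \<in> a" for D a unfolding E_def uf_plus_mem by simp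
  define CD where "CD D = C \<inter> {a \<in> betaN. \<forall>A\<in>{E D}. A \<in> a}" for D
  define \<C> where "\<C> = CD ` r"
  have "UNIV \<in> r" using a uf_UNIV by simp
  then have ne: "\<C> \<noteq> {}" unfolding \<C>_def by auto
  have cl: "\<forall>K\<in>\<C>. closedb K \<and> K \<noteq> {}"
  proof
    fix K assume "K \<in> \<C>"
    then obtain D where D: "D \<in> r" "K = CD D" unfolding \<C>_def by auto
    have "closedb K" unfolding D CD_def by (intro closedb_Int C closedb_basic)
    moreover obtain c where c: "c \<in> C" "D \<in> uf_plus x c" using a D(1) by blast
    then have "c \<in> K" unfolding D CD_def using memE[of D c] C closedb_sub betaN_iff by simp
    ultimately show "closedb K \<and> K \<noteq> {}" by auto
  qed
  have dir: "\<forall>C1\<in>\<C>. \<forall>C2\<in>\<C>. \<exists>C3\<in>\<C>. C3 \<subseteq> C1 \<inter> C2"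
  proof (intro ballI)
    fix C1 C2 assume "C1 \<in> \<C>" "C2 \<in> \<C>"
    then obtain D1 D2 where D: "D1 \<in> r" "C1 = CD D1" "D2 \<in> r" "C2 = CD D2" unfolding \<C>_def by auto
    have "D1 \<inter> D2 \<in> r" using D a uf_Int[of r D1 D2] by simp
    moreover have "CD (D1 \<inter> D2) \<subseteq> CD D1 \<inter> CD D2"
    proof
      fix c assume c: "c \<in> CD (D1 \<inter> D2)"
      then have cu: "uf c" "c \<in> C" unfolding CD_def betaN_iff by auto
      have "E (D1 \<inter> D2) \<in> c" using c unfolding CD_def by simp
      then have "D1 \<inter> D2 \<in> uf_plus x c" using memE by simp
      then have "D1 \<in> uf_plus x c \<and> D2 \<in> uf_plus x c" using uf_Int[OF uf_plus_uf[OF x cu(1)]] by simp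
      then show "c \<in> CD D1 \<inter> CD D2" unfolding CD_def using memE cu betaN_iff by simp
    qed
    ultimately show "\<exists>C3\<in>\<C>. C3 \<subseteq> C1 \<inter> C2" unfolding \<C>_def D by auto
  qed
  obtain c where c: "uf c" "\<forall>K\<in>\<C>. c \<in> K" using compact_dir[OF ne cl dir] by auto
  have cC: "c \<in> C" using c(2) \<open>UNIV \<in> r\<close> unfolding \<C>_def CD_def by auto
  have "r \<subseteq> uf_plus x c"
  proof
    fix D assume "D \<in> r"
    then have "c \<in> CD D" using c unfolding \<C>_def by auto
    then show "D \<in> uf_plus x c" unfolding CD_def using memE by simp
  qed
  then have "r = uf_plus x c" using uf_sub_eq a uf_plus_uf[OF x c(1)] by simp
  then show "r \<in> uf_plus x ` C" using cC by auto
qed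

lemma closedb_fix:
  assumes A: "closedb A" and x: "uf x"
  shows "closedb {a \<in> A. uf_plus x a = x}"
  unfolding closedb_def
proof (intro conjI allI impI)
  show "{a \<in> A. uf_plus x a = x} \<subseteq> betaN" using A unfolding closedb_def by auto
  fix p assume a: "uf p \<and> (\<forall>D\<in>p. \<exists>q\<in>{a \<in> A. uf_plus x a = x}. D \<in> q)"
  have "\<forall>D\<in>p. \<exists>q\<in>A. D \<in> q" using a by auto
  then have pA: "p \<in> A" using a A unfolding closedb_def by simp
  have "x \<subseteq> uf_plus x p"
  proof
    fix D assume D: "D \<in> x"
    show "D \<in> uf_plus x p"
    proof (rule ccontr)
      assume "D \<notin> uf_plus x p"
      then have "- {n. {m. m + n \<in> D} \<in> x} \<in> p" using a uf_compl unfolding uf_plus_mem by simp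
      then obtain q where q: "q \<in> A" "uf_plus x q = x" "- {n. {m. m + n \<in> D} \<in> x} \<in> q" using a by auto
      have "D \<in> uf_plus x q" using q D by simp
      then have "{n. {m. m + n \<in> D} \<in> x} \<in> q" unfolding uf_plus_mem .
      moreover have "uf q" using q(1) A closedb_sub by simp
      ultimately show False using q(3) uf_compl by simp
    qed
  qed
  then have "x = uf_plus x p" using uf_sub_eq x uf_plus_uf a by simp
  then show "p \<in> {a \<in> A. uf_plus x a = x}" using pA by simp
qed



lemma zorn_min:
  fixes \<A> :: "'a set set"
  assumes ne: "\<A> \<noteq> {}"
    and ch: "\<And>C. C \<subseteq> \<A> \<Longrightarrow> C \<noteq> {} \<Longrightarrow> (\<forall>X\<in>C. \<forall>Y\<in>C. X \<subseteq> Y \<or> Y \<subseteq> X) \<Longrightarrow> \<Inter>C \<in> \<A>"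
  shows "\<exists>M\<in>\<A>. \<forall>X\<in>\<A>. X \<subseteq> M \<longrightarrow> X = M"
proof -
  define \<B> where "\<B> = uminus ` \<A>"
  have "\<forall>C\<in>chains \<B>. \<exists>U\<in>\<B>. \<forall>X\<in>C. X \<subseteq> U"
  proof
    fix C assume C: "C \<in> chains \<B>"
    show "\<exists>U\<in>\<B>. \<forall>X\<in>C. X \<subseteq> U"
    proof (cases "C = {}")
      case True
      then show ?thesis using ne unfolding \<B>_def by auto
    next
      case False
      have CB: "C \<subseteq> \<B>" and chn: "\<forall>X\<in>C. \<forall>Y\<in>C. X \<subseteq> Y \<or> Y \<subseteq> X"
        using C unfolding chains_def chain_subset_def by auto
      define C' where "C' = uminus ` C"
      have "C' \<subseteq> \<A>" using CB unfolding C'_def \<B>_def by auto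
      moreover have "C' \<noteq> {}" using False unfolding C'_def by auto
      moreover have "\<forall>X\<in>C'. \<forall>Y\<in>C'. X \<subseteq> Y \<or> Y \<subseteq> X" using chn unfolding C'_def by auto
      ultimately have I: "\<Inter>C' \<in> \<A>" by (rule ch)
      have "- \<Inter>C' = \<Union>C" unfolding C'_def by auto
      then have "\<Union>C \<in> \<B>" using I unfolding \<B>_def by (metis image_eqI)
      then show ?thesis by auto
    qed
  qed
  then obtain M where M: "M \<in> \<B>" "\<forall>X\<in>\<B>. M \<subseteq> X \<longrightarrow> X = M" using Zorn_Lemma2[of \<B>] by auto
  have "- M \<in> \<A>" using M(1) unfolding \<B>_def by auto
  moreover have "\<forall>X\<in>\<A>. X \<subseteq> - M \<longrightarrow> X = - M"
  proof (intro ballI impI)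
    fix X assume "X \<in> \<A>" "X \<subseteq> - M"
    then have "- X \<in> \<B>" "M \<subseteq> - X" unfolding \<B>_def by auto
    then have "- X = M" using M(2) by auto
    then show "X = - M" by auto
  qed
  ultimately show ?thesis by auto
qed

lemma chain_Inter_closed:
  assumes "C \<noteq> {}" "\<forall>X\<in>C. closedb X \<and> X \<noteq> {}" "\<forall>X\<in>C. \<forall>Y\<in>C. X \<subseteq> Y \<or> Y \<subseteq> X"
  shows "closedb (\<Inter>C)" "\<Inter>C \<noteq> {}"
proof -
  show "closedb (\<Inter>C)" using closedb_Inter assms by auto
  have dir: "\<forall>C1\<in>C. \<forall>C2\<in>C. \<exists>C3\<in>C. C3 \<subseteq> C1 \<inter> C2"
  proof (intro ballI)
    fix C1 C2 assume "C1 \<in> C" "C2 \<in> C"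
    then show "\<exists>C3\<in>C. C3 \<subseteq> C1 \<inter> C2" using assms(3)
      by (metis Int_absorb1 Int_absorb2 order_refl)
  qed
  obtain p where "uf p" "\<forall>X\<in>C. p \<in> X" using compact_dir[OF assms(1) assms(2) dir] by auto
  then show "\<Inter>C \<noteq> {}" by auto
qed

lemma ellis:
  assumes ne: "S \<noteq> {}" and cl: "closedb S" and sg: "\<forall>a\<in>S. \<forall>b\<in>S. uf_plus a b \<in> S"
  shows "\<exists>e\<in>S. uf_plus e e = e"
proof -
  define \<A> where "\<A> = {A. A \<subseteq> S \<and> A \<noteq> {} \<and> closedb A \<and> (\<forall>a\<in>A. \<forall>b\<in>A. uf_plus a b \<in> A)}"
  have "S \<in> \<A>" unfolding \<A>_def using ne cl sg by auto
  then have "\<A> \<noteq> {}" by auto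
  moreover have "\<Inter>C \<in> \<A>" if C: "C \<subseteq> \<A>" "C \<noteq> {}" "\<forall>X\<in>C. \<forall>Y\<in>C. X \<subseteq> Y \<or> Y \<subseteq> X" for C
  proof -
    have "\<forall>X\<in>C. closedb X \<and> X \<noteq> {}" using C(1) unfolding \<A>_def by auto
    then have "closedb (\<Inter>C)" "\<Inter>C \<noteq> {}" using chain_Inter_closed C(2,3) by auto
    moreover have "\<Inter>C \<subseteq> S"
    proof -
      obtain X where "X \<in> C" using C(2) by auto
      then have "X \<subseteq> S" using C(1) unfolding \<A>_def by auto
      then show ?thesis using \<open>X \<in> C\<close> by auto
    qed
    moreover have "\<forall>a\<in>\<Inter>C. \<forall>b\<in>\<Inter>C. uf_plus a b \<in> \<Inter>C" using C(1) unfolding \<A>_def by auto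
    ultimately show ?thesis unfolding \<A>_def by auto
  qed
  ultimately obtain A where A: "A \<in> \<A>" "\<forall>X\<in>\<A>. X \<subseteq> A \<longrightarrow> X = A" using zorn_min[of \<A>] by auto
  have AS: "A \<subseteq> S" "A \<noteq> {}" "closedb A" "\<forall>a\<in>A. \<forall>b\<in>A. uf_plus a b \<in> A"
    using A(1) unfolding \<A>_def by auto
  obtain x where xA: "x \<in> A" using AS(2) by auto
  have ux: "uf x" using xA AS(3) closedb_sub by simp
  define B where "B = uf_plus x ` A"
  have "B \<in> \<A>"
  proof -
    have "B \<subseteq> A" unfolding B_def using AS(4) xA by auto
    moreover have "B \<noteq> {}" unfolding B_def using AS(2) by auto
    moreover have "closedb B" unfolding B_def using closedb_image AS(3) ux by simp
    moreover have "\<forall>a\<in>B. \<forall>b\<in>B. uf_plus a b \<in> B"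
    proof (intro ballI)
      fix a b assume "a \<in> B" "b \<in> B"
      then obtain a' b' where ab: "a' \<in> A" "b' \<in> A" "a = uf_plus x a'" "b = uf_plus x b'" unfolding B_def by auto
      have "uf_plus a b = uf_plus x (uf_plus a' (uf_plus x b'))"
        unfolding ab by (simp add: uf_plus_assoc)
      moreover have "uf_plus a' (uf_plus x b') \<in> A" using AS(4) ab xA by auto
      ultimately show "uf_plus a b \<in> B" unfolding B_def by auto
    qed
    ultimately show ?thesis unfolding \<A>_def using AS(1) by auto
  qed
  moreover have "B \<subseteq> A" unfolding B_def using AS(4) xA by auto
  ultimately have BA: "B = A" using A(2) by auto
  define D where "D = {a \<in> A. uf_plus x a = x}"
  have "D \<in> \<A>"
  proof -
    have "D \<subseteq> S" unfolding D_def using AS(1) by auto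
    moreover have "D \<noteq> {}"
    proof -
      have "x \<in> B" using BA xA by simp
      then obtain a where "a \<in> A" "x = uf_plus x a" unfolding B_def by auto
      then show ?thesis unfolding D_def by auto
    qed
    moreover have "closedb D" unfolding D_def using closedb_fix AS(3) ux by simp
    moreover have "\<forall>a\<in>D. \<forall>b\<in>D. uf_plus a b \<in> D"
    proof (intro ballI)
      fix a b assume "a \<in> D" "b \<in> D"
      then have "a \<in> A" "b \<in> A" "uf_plus x a = x" "uf_plus x b = x" unfolding D_def by auto
      moreover then have "uf_plus x (uf_plus a b) = x" by (metis uf_plus_assoc)
      ultimately show "uf_plus a b \<in> D" unfolding D_def using AS(4) by auto
    qed
    ultimately show ?thesis unfolding \<A>_def by auto
  qed
  moreover have "D \<subseteq> A" unfolding D_def by auto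
  ultimately have "D = A" using A(2) by auto
  then have "uf_plus x x = x" using xA unfolding D_def by auto
  then show ?thesis using xA AS(1) by auto
qed

lemma min_right_ideal:
  "\<exists>R. R \<noteq> {} \<and> closedb R \<and> (\<forall>r\<in>R. \<forall>q\<in>betaN. uf_plus r q \<in> R) \<and> R \<subseteq> smallest_ideal"
proof -
  define \<A> where "\<A> = {R. R \<noteq> {} \<and> closedb R \<and> (\<forall>r\<in>R. \<forall>q\<in>betaN. uf_plus r q \<in> R)}"
  have "{A. (0::nat) \<in> A} \<in> betaN" using uf_principal betaN_iff by auto
  then have "betaN \<noteq> {}" by auto
  moreover have "\<forall>r\<in>betaN. \<forall>q\<in>betaN. uf_plus r q \<in> betaN" using uf_plus_uf betaN_iff by auto
  ultimately have "betaN \<in> \<A>" unfolding \<A>_def using closedb_betaN by auto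
  then have "\<A> \<noteq> {}" by auto
  moreover have "\<Inter>C \<in> \<A>" if C: "C \<subseteq> \<A>" "C \<noteq> {}" "\<forall>X\<in>C. \<forall>Y\<in>C. X \<subseteq> Y \<or> Y \<subseteq> X" for C
  proof -
    have "\<forall>X\<in>C. closedb X \<and> X \<noteq> {}" using C(1) unfolding \<A>_def by auto
    then have "closedb (\<Inter>C)" "\<Inter>C \<noteq> {}" using chain_Inter_closed C(2,3) by auto
    moreover have "\<forall>r\<in>\<Inter>C. \<forall>q\<in>betaN. uf_plus r q \<in> \<Inter>C" using C(1) unfolding \<A>_def by auto
    ultimately show ?thesis unfolding \<A>_def by auto
  qed
  ultimately obtain R where R: "R \<in> \<A>" "\<forall>X\<in>\<A>. X \<subseteq> R \<longrightarrow> X = R" using zorn_min[of \<A>] by auto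
  have RR: "R \<noteq> {}" "closedb R" "\<forall>r\<in>R. \<forall>q\<in>betaN. uf_plus r q \<in> R" using R(1) unfolding \<A>_def by auto
  have "R \<subseteq> I" if I: "two_sided_ideal I" for I
  proof -
    have Ip: "I \<noteq> {}" "I \<subseteq> betaN" "\<forall>p\<in>I. \<forall>q\<in>betaN. uf_plus p q \<in> I \<and> uf_plus q p \<in> I"
      using I unfolding two_sided_ideal_def by auto
    obtain i where i: "i \<in> I" using Ip(1) by auto
    obtain r where r: "r \<in> R" using RR(1) by auto
    define x where "x = uf_plus r i"
    have xR: "x \<in> R" unfolding x_def using RR(3) r i Ip(2) by auto
    have "r \<in> betaN" using r RR(2) unfolding closedb_def by auto
    then have xI: "x \<in> I" unfolding x_def using Ip(3) i by auto
    have ux: "uf x" using xI Ip(2) betaN_iff by auto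
    define B where "B = uf_plus x ` betaN"
    have "B \<in> \<A>"
    proof -
      have "B \<noteq> {}" unfolding B_def using \<open>betaN \<noteq> {}\<close> by auto
      moreover have "closedb B" unfolding B_def using closedb_image closedb_betaN ux by simp
      moreover have "\<forall>a\<in>B. \<forall>q\<in>betaN. uf_plus a q \<in> B"
      proof (intro ballI)
        fix a q assume "a \<in> B" "q \<in> betaN"
        then obtain a' where "a' \<in> betaN" "a = uf_plus x a'" unfolding B_def by auto
        moreover then have "uf_plus a' q \<in> betaN" using \<open>q \<in> betaN\<close> uf_plus_uf betaN_iff by auto
        ultimately show "uf_plus a q \<in> B" unfolding B_def by (auto simp: uf_plus_assoc)
      qed
      ultimately show ?thesis unfolding \<A>_def by auto
    qed
    moreover have "B \<subseteq> R" unfolding B_def using RR(3) xR by auto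
    ultimately have "B = R" using R(2) by auto
    moreover have "B \<subseteq> I" unfolding B_def using Ip(3) xI by auto
    ultimately show ?thesis by auto
  qed
  then have "R \<subseteq> smallest_ideal" unfolding smallest_ideal_def by auto
  then show ?thesis using RR by auto
qed

definition pickp :: "nat set set \<Rightarrow> nat set \<Rightarrow> nat" where
  "pickp p S = (SOME n. n \<in> S \<and> {m. m + n \<in> S} \<in> p)"

primrec CC :: "nat set set \<Rightarrow> nat set \<Rightarrow> nat \<Rightarrow> nat set" where
  "CC p A 0 = A"
| "CC p A (Suc k) = CC p A k \<inter> {m. m + pickp p (CC p A k) \<in> CC p A k} \<inter> {pickp p (CC p A k)<..}"

lemma pick_ok:
  assumes "uf p" "uf_plus p p = p" "S \<in> p"
  shows "pickp p S \<in> S \<and> {m. m + pickp p S \<in> S} \<in> p"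
proof -
  have "S \<in> uf_plus p p" using assms by simp
  then have "{n. {m. m + n \<in> S} \<in> p} \<in> p" by (simp add: uf_plus_mem)
  then have "S \<inter> {n. {m. m + n \<in> S} \<in> p} \<in> p" using uf_Int[OF assms(1)] assms(3) by simp
  then have "S \<inter> {n. {m. m + n \<in> S} \<in> p} \<noteq> {}" using uf_ne[OF assms(1)] by simp
  then have "\<exists>n. n \<in> S \<and> {m. m + n \<in> S} \<in> p" by auto
  then show ?thesis unfolding pickp_def by (rule someI_ex)
qed

lemma galvin_glazer:
  assumes P: "uf p" "uf_plus p p = p" "\<forall>n. {n} \<notin> p" and A: "A \<in> p"
  shows "IP_set A"
proof -
  define x where "x k = pickp p (CC p A k)" for k
  have CCin: "CC p A k \<in> p" for k
  proof (induction k)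
    case 0 then show ?case using A by simp
  next
    case (Suc k)
    have pk: "pickp p (CC p A k) \<in> CC p A k \<and> {m. m + pickp p (CC p A k) \<in> CC p A k} \<in> p"
      using pick_ok[OF P(1,2) Suc] .
    have "{..pickp p (CC p A k)} \<notin> p" using uf_finite[OF P(1,3)] by simp
    then have "- {..pickp p (CC p A k)} \<in> p" using uf_compl[OF P(1)] by metis
    moreover have "- {..pickp p (CC p A k)} = {pickp p (CC p A k)<..}" by auto
    ultimately have "{pickp p (CC p A k)<..} \<in> p" by metis
    then show ?case using Suc pk uf_Int[OF P(1)] by simp
  qed
  have xin: "x k \<in> CC p A k" and xsh: "{m. m + x k \<in> CC p A k} \<in> p" for k
    using pick_ok[OF P(1,2) CCin[of k]] unfolding x_def by auto
  have CCsuc: "CC p A (Suc k) \<subseteq> CC p A k" for k by auto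
  have CCmono: "i \<le> j \<Longrightarrow> CC p A j \<subseteq> CC p A i" for i j
    using lift_Suc_antimono_le[of "CC p A", OF CCsuc] by blast
  have sm: "strict_mono x"
    unfolding strict_mono_Suc_iff
  proof
    fix k
    have "x (Suc k) \<in> CC p A (Suc k)" by (rule xin)
    then show "x k < x (Suc k)" unfolding x_def by simp
  qed
  have main: "finite F \<Longrightarrow> F \<noteq> {} \<Longrightarrow> sum x F \<in> CC p A (Min F)" for F
  proof (induction "card F" arbitrary: F rule: less_induct)
    case less
    define i where "i = Min F"
    have iF: "i \<in> F" unfolding i_def using less.prems by simp
    define F' where "F' = F - {i}"
    show ?case
    proof (cases "F' = {}")
      case True
      then have "F = {i}" using iF unfolding F'_def by auto
      then have "sum x F = x i" by simp
      then show ?thesis using xin[of i] unfolding i_def by simp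
    next
      case False
      have fin: "finite F'" using less.prems unfolding F'_def by simp
      have "card F' < card F" unfolding F'_def using iF less.prems by (simp add: card_gt_0_iff)
      then have IH: "sum x F' \<in> CC p A (Min F')" using less.hyps fin False by simp
      have "Min F' \<in> F'" using fin False by simp
      then have "i < Min F'" unfolding F'_def i_def using less.prems
        by (metis DiffE Min_le insertCI le_neq_implies_less)
      then have "CC p A (Min F') \<subseteq> CC p A (Suc i)" using CCmono[of "Suc i" "Min F'"] by (simp del: CC.simps)
      then have "sum x F' \<in> CC p A (Suc i)" using IH by auto
      then have "sum x F' + x i \<in> CC p A i" unfolding x_def by (simp only: CC.simps) simp
      moreover have "sum x F = x i + sum x F'"
        unfolding F'_def using less.prems iF by (simp add: sum.remove)
      ultimately show ?thesis unfolding i_def by (simp add: add.commute)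
    qed
  qed
  have "\<forall>F. finite F \<and> F \<noteq> {} \<longrightarrow> sum x F \<in> A"
  proof (intro allI impI)
    fix F :: "nat set" assume "finite F \<and> F \<noteq> {}"
    then have "sum x F \<in> CC p A (Min F)" using main by simp
    then show "sum x F \<in> A" using CCmono[of 0 "Min F"] by auto
  qed
  then show ?thesis unfolding IP_set_def using sm by auto
qed



lemma uf_UN: fixes M :: nat shows "uf p \<Longrightarrow> (\<Union>t<M. P t) \<in> p \<Longrightarrow> \<exists>t<M. P t \<in> p"
proof (induction M)
  case 0 then show ?case using uf_empty by simp
next
  case (Suc M)
  have "(\<Union>t<Suc M. P t) = (\<Union>t<M. P t) \<union> P M" by (auto simp: lessThan_Suc)
  then have "(\<Union>t<M. P t) \<in> p \<or> P M \<in> p" using uf_Un[OF Suc.prems(1)] Suc.prems(2) by simp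
  then show ?case using Suc by (metis less_Suc_eq)
qed

lemma bin_close:
  assumes "N > (0::nat)" "0 \<le> a" "0 \<le> b" "nat \<lfloor>real N * a\<rfloor> = nat \<lfloor>real N * b\<rfloor>"
  shows "\<bar>b - a\<bar> < 1 / real N"
proof -
  have "0 \<le> \<lfloor>real N * a\<rfloor>" "0 \<le> \<lfloor>real N * b\<rfloor>" using assms by simp_all
  then have "\<lfloor>real N * a\<rfloor> = \<lfloor>real N * b\<rfloor>" using assms(4) by (simp add: eq_nat_nat_iff)
  then have "\<bar>real N * b - real N * a\<bar> < 1" by linarith
  then have "real N * \<bar>b - a\<bar> < 1" by (simp add: abs_mult right_diff_distrib[symmetric])
  then show ?thesis using assms(1) by (simp add: field_simps)
qed

lemma frac_diff_small:
  assumes "\<bar>frac y - frac x\<bar> < d"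
  shows "frac (y - x) < d \<or> frac (y - x) > 1 - d"
proof (cases "frac x \<le> frac y")
  case True
  then have "frac (y - x) = frac y - frac x" by (rule frac_diff_pos)
  then show ?thesis using assms True by auto
next
  case False
  then have "frac (y - x) = frac y + 1 - frac x" by (intro frac_diff_neg) simp
  then show ?thesis using assms False by auto
qed

lemma idem_zero:
  assumes e: "uf e" "uf_plus e e = e" and eps: "\<epsilon> > 0"
  shows "{m. frac (real m * \<gamma>) < \<epsilon> \<or> frac (real m * \<gamma>) > 1 - \<epsilon>} \<in> e"
proof (rule ccontr)
  define W where "W = {m. \<epsilon> \<le> frac (real m * \<gamma>) \<and> frac (real m * \<gamma>) \<le> 1 - \<epsilon>}"
  assume "{m. frac (real m * \<gamma>) < \<epsilon> \<or> frac (real m * \<gamma>) > 1 - \<epsilon>} \<notin> e"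
  moreover have "- {m. frac (real m * \<gamma>) < \<epsilon> \<or> frac (real m * \<gamma>) > 1 - \<epsilon>} = W"
    unfolding W_def by auto
  ultimately have We: "W \<in> e" using uf_compl[OF e(1)] by metis
  obtain N :: nat where N: "N > 0" "1 / real N < \<epsilon>"
    by (metis eps gr_zeroI inverse_eq_divide real_arch_inverse)
  define bin where "bin m = nat \<lfloor>real N * frac (real m * \<gamma>)\<rfloor>" for m
  define P where "P t = W \<inter> {m. bin m = t}" for t
  have "W \<subseteq> (\<Union>t<N. P t)"
  proof
    fix m assume "m \<in> W"
    have "real N * frac (real m * \<gamma>) < real N * 1" using N frac_lt_1 by (intro mult_strict_left_mono) auto
    then have "\<lfloor>real N * frac (real m * \<gamma>)\<rfloor> < int N" by (simp add: floor_less_iff)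
    then have "bin m < N" unfolding bin_def using N by (simp add: nat_less_iff del: floor_less_iff)
    then show "m \<in> (\<Union>t<N. P t)" unfolding P_def using \<open>m \<in> W\<close> by auto
  qed
  then have "(\<Union>t<N. P t) \<in> e" using uf_mono[OF e(1) We] by simp
  then obtain t where "t < N" "P t \<in> e" using uf_UN[OF e(1)] by blast
  define n where "n = pickp e (P t)"
  have n: "n \<in> P t" "{m. m + n \<in> P t} \<in> e" using pick_ok[OF e \<open>P t \<in> e\<close>] unfolding n_def by auto
  have "{m. m + n \<in> P t} \<inter> P t \<in> e" using n(2) \<open>P t \<in> e\<close> uf_Int[OF e(1)] by simp
  then obtain m where m: "m + n \<in> P t" "m \<in> P t" using uf_ne[OF e(1)] by blast
  have "bin (m + n) = bin m" using m unfolding P_def by simp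
  then have cl: "\<bar>frac (real (m+n) * \<gamma>) - frac (real m * \<gamma>)\<bar> < 1 / real N"
    unfolding bin_def using bin_close[OF N(1)] by (metis frac_ge_0)
  have "real (m + n) * \<gamma> - real m * \<gamma> = real n * \<gamma>" by (simp add: algebra_simps)
  then have "frac (real n * \<gamma>) < 1 / real N \<or> frac (real n * \<gamma>) > 1 - 1 / real N"
    using frac_diff_small[OF cl] by simp
  moreover have "n \<in> W" using n(1) unfolding P_def by simp
  ultimately show False unfolding W_def using N(2) by auto
qed

definition Ad :: "real \<Rightarrow> real \<Rightarrow> nat set" where
  "Ad \<gamma> \<delta> = {n. 0 < frac (real n * \<gamma>) \<and> frac (real n * \<gamma>) < \<delta>}"

lemma Ad_ne: assumes "\<gamma> \<notin> \<rat>" "\<delta> > 0" shows "Ad \<gamma> \<delta> \<noteq> {}"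
proof -
  define a where "a = min \<delta> 1 / 2"
  have a: "0 < a" "a \<le> 1" "2 * a \<le> \<delta>" unfolding a_def using assms(2) by auto
  obtain k where "k > 0" "\<bar>frac (real k * \<gamma>) - a\<bar> < a"
    using Kronecker_approx_1_explicit[OF assms(1), of a a] a by auto
  then have "k \<in> Ad \<gamma> \<delta>" unfolding Ad_def using a by (auto simp del: frac_gt_0_iff)
  then show ?thesis by auto
qed

lemma Ad_mono: "\<delta> \<le> \<delta>' \<Longrightarrow> Ad \<gamma> \<delta> \<subseteq> Ad \<gamma> \<delta>'"
  unfolding Ad_def by auto

lemma Ad_add:
  assumes "n \<in> Ad \<gamma> \<eta>" "m \<in> Ad \<gamma> \<eta>" "2 * \<eta> \<le> \<delta>" "2 * \<eta> \<le> 1"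
  shows "m + n \<in> Ad \<gamma> \<delta>"
proof -
  have "frac (real (m + n) * \<gamma>) = frac (real m * \<gamma> + real n * \<gamma>)" by (simp add: algebra_simps)
  also have "\<dots> = frac (real m * \<gamma>) + frac (real n * \<gamma>)"
    using frac_add[of "real m * \<gamma>" "real n * \<gamma>"] assms unfolding Ad_def by (auto simp del: frac_gt_0_iff)
  finally show ?thesis using assms unfolding Ad_def by (auto simp del: frac_gt_0_iff)
qed

lemma exists_right_idem:
  assumes g: "\<gamma> \<notin> \<rat>"
  shows "\<exists>p. minimal_idempotent p \<and> (\<forall>\<delta>>0. Ad \<gamma> \<delta> \<in> p)"
proof -
  define F where "F = Ad \<gamma> ` {0<..}"
  have F1: "F \<noteq> {}" unfolding F_def by auto
  have F2: "{} \<notin> F" unfolding F_def using Ad_ne[OF g] by auto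
  have F3: "\<forall>A\<in>F. \<forall>B\<in>F. \<exists>C\<in>F. C \<subseteq> A \<inter> B"
  proof (intro ballI)
    fix A B assume "A \<in> F" "B \<in> F"
    then obtain d1 d2 where d: "d1 > 0" "d2 > 0" "A = Ad \<gamma> d1" "B = Ad \<gamma> d2" unfolding F_def by auto
    have "Ad \<gamma> (min d1 d2) \<subseteq> A \<inter> B" unfolding d using Ad_mono by auto
    moreover have "Ad \<gamma> (min d1 d2) \<in> F" unfolding F_def using d by auto
    ultimately show "\<exists>C\<in>F. C \<subseteq> A \<inter> B" by blast
  qed
  obtain s where s: "uf s" "F \<subseteq> s" using uf_exists[OF F1 F2 F3] by auto
  define T where "T = {p \<in> betaN. \<forall>A\<in>F. A \<in> p}"
  have T_iff: "p \<in> T \<longleftrightarrow> uf p \<and> (\<forall>\<delta>>0. Ad \<gamma> \<delta> \<in> p)" for p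
    unfolding T_def F_def betaN_iff by auto
  obtain R where R: "R \<noteq> {}" "closedb R" "\<forall>r\<in>R. \<forall>q\<in>betaN. uf_plus r q \<in> R" "R \<subseteq> smallest_ideal"
    using min_right_ideal by auto
  have Rsg: "\<forall>a\<in>R. \<forall>b\<in>R. uf_plus a b \<in> R"
    using R(2,3) unfolding closedb_def by auto
  obtain e where e: "e \<in> R" "uf_plus e e = e" using ellis[OF R(1,2) Rsg] by auto
  have ue: "uf e" using e(1) R(2) closedb_sub by simp
  define x where "x = uf_plus e s"
  have xR: "x \<in> R" unfolding x_def using R(3) e(1) s(1) betaN_iff by simp
  have xT: "x \<in> T"
  proof -
    have "Ad \<gamma> \<delta> \<in> x" if d: "\<delta> > 0" for \<delta>
    proof -
      define \<eta> where "\<eta> = min \<delta> 1 / 2"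
      have eta: "\<eta> > 0" "2 * \<eta> \<le> \<delta>" "2 * \<eta> \<le> 1" unfolding \<eta>_def using d by auto
      have "Ad \<gamma> \<eta> \<subseteq> {n. {m. m + n \<in> Ad \<gamma> \<delta>} \<in> e}"
      proof
        fix n assume n: "n \<in> Ad \<gamma> \<eta>"
        define c where "c = frac (real n * \<gamma>)"
        have c: "0 < c" "c < \<eta>" using n unfolding c_def Ad_def by (auto simp del: frac_gt_0_iff)
        have Z: "{m. frac (real m * \<gamma>) < c \<or> frac (real m * \<gamma>) > 1 - c} \<in> e"
          using idem_zero[OF ue e(2) c(1)] .
        have "{m. frac (real m * \<gamma>) < c \<or> frac (real m * \<gamma>) > 1 - c} \<subseteq> {m. m + n \<in> Ad \<gamma> \<delta>}"
        proof
          fix m assume "m \<in> {m. frac (real m * \<gamma>) < c \<or> frac (real m * \<gamma>) > 1 - c}"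
          then have mm: "frac (real m * \<gamma>) < c \<or> frac (real m * \<gamma>) > 1 - c" by simp
          have "frac (real (m + n) * \<gamma>) = frac (real m * \<gamma> + real n * \<gamma>)" by (simp add: algebra_simps)
          also have "\<dots> = (if frac (real m * \<gamma>) + c < 1 then frac (real m * \<gamma>) + c else frac (real m * \<gamma>) + c - 1)"
            unfolding c_def by (rule frac_add)
          finally have fe: "frac (real (m + n) * \<gamma>) = (if frac (real m * \<gamma>) + c < 1 then frac (real m * \<gamma>) + c else frac (real m * \<gamma>) + c - 1)" .
          define a where "a = frac (real m * \<gamma>)"
          define b where "b = frac (real (m + n) * \<gamma>)"
          have a: "0 \<le> a" "a < 1" unfolding a_def by (auto simp: frac_lt_1)
          have fe': "b = (if a + c < 1 then a + c else a + c - 1)" using fe unfolding a_def b_def .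
          have mm': "a < c \<or> a > 1 - c" using mm unfolding a_def .
          have "0 < b \<and> b < \<delta>" using fe' mm' a c eta by (auto split: if_splits)
          then show "m \<in> {m. m + n \<in> Ad \<gamma> \<delta>}" unfolding Ad_def b_def by (simp del: frac_gt_0_iff)
        qed
        then show "n \<in> {n. {m. m + n \<in> Ad \<gamma> \<delta>} \<in> e}" using uf_mono[OF ue Z] by simp
      qed
      moreover have "Ad \<gamma> \<eta> \<in> s" using s(2) eta unfolding F_def by auto
      ultimately have "{n. {m. m + n \<in> Ad \<gamma> \<delta>} \<in> e} \<in> s" using uf_mono[OF s(1)] by blast
      then show ?thesis unfolding x_def uf_plus_mem .
    qed
    moreover have "uf x" unfolding x_def using uf_plus_uf ue s(1) by simp
    ultimately show ?thesis using T_iff by simp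
  qed
  define S where "S = R \<inter> T"
  have Sne: "S \<noteq> {}" unfolding S_def using xR xT by auto
  have Scl: "closedb S" unfolding S_def T_def using closedb_Int R(2) closedb_basic by simp
  have Ssg: "\<forall>a\<in>S. \<forall>b\<in>S. uf_plus a b \<in> S"
  proof (intro ballI)
    fix a b assume ab: "a \<in> S" "b \<in> S"
    then have ua: "uf a" "\<forall>\<delta>>0. Ad \<gamma> \<delta> \<in> a" and ub: "uf b" "\<forall>\<delta>>0. Ad \<gamma> \<delta> \<in> b"
      using T_iff unfolding S_def by auto
    have "uf_plus a b \<in> R" using ab R(3) ub betaN_iff unfolding S_def by simp
    moreover have "uf_plus a b \<in> T"
    proof -
      have "Ad \<gamma> \<delta> \<in> uf_plus a b" if d: "\<delta> > 0" for \<delta>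
      proof -
        define \<eta> where "\<eta> = min \<delta> 1 / 2"
        have eta: "\<eta> > 0" "2 * \<eta> \<le> \<delta>" "2 * \<eta> \<le> 1" unfolding \<eta>_def using d by auto
        have "Ad \<gamma> \<eta> \<subseteq> {n. {m. m + n \<in> Ad \<gamma> \<delta>} \<in> a}"
        proof
          fix n assume n: "n \<in> Ad \<gamma> \<eta>"
          have "Ad \<gamma> \<eta> \<subseteq> {m. m + n \<in> Ad \<gamma> \<delta>}" using Ad_add[OF n _ eta(2,3)] by auto
          then show "n \<in> {n. {m. m + n \<in> Ad \<gamma> \<delta>} \<in> a}" using uf_mono[OF ua(1)] ua(2) eta(1) by auto
        qed
        then have "{n. {m. m + n \<in> Ad \<gamma> \<delta>} \<in> a} \<in> b" using uf_mono[OF ub(1)] ub(2) eta(1) by auto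
        then show ?thesis unfolding uf_plus_mem .
      qed
      moreover have "uf (uf_plus a b)" using uf_plus_uf ua(1) ub(1) by simp
      ultimately show ?thesis using T_iff by simp
    qed
    ultimately show "uf_plus a b \<in> S" unfolding S_def by simp
  qed
  obtain e' where e': "e' \<in> S" "uf_plus e' e' = e'" using ellis[OF Sne Scl Ssg] by auto
  have e'T: "uf e'" "\<forall>\<delta>>0. Ad \<gamma> \<delta> \<in> e'" using e'(1) T_iff unfolding S_def by auto
  have "\<forall>n. {n} \<notin> e'"
  proof (intro allI notI)
    fix n assume n: "{n} \<in> e'"
    define \<delta> where "\<delta> = (if frac (real n * \<gamma>) > 0 then frac (real n * \<gamma>) else 1)"
    have "\<delta> > 0" unfolding \<delta>_def by auto
    then have "{n} \<inter> Ad \<gamma> \<delta> \<in> e'" using e'T n uf_Int by simp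
    then have "{n} \<inter> Ad \<gamma> \<delta> \<noteq> {}" by (rule uf_ne[OF e'T(1)])
    then have "n \<in> Ad \<gamma> \<delta>" by auto
    then show False unfolding Ad_def \<delta>_def by (auto split: if_splits simp del: frac_gt_0_iff)
  qed
  moreover have "e' \<in> smallest_ideal" using e'(1) R(4) unfolding S_def by auto
  ultimately have "minimal_idempotent e'" unfolding minimal_idempotent_def using e'(2) e'T(1) betaN_iff by simp
  then show ?thesis using e'T by auto
qed

theorem mainTheorem9:
  fixes k :: nat
  assumes "k \<ge> 1"
  defines "u \<equiv> map fib_word [0..<k]"
  shows "IP_star_set (occ fib_word u) \<and> central_star (occ fib_word u)
    \<and> IP_set (occ fib_word_g (0 # u)) \<and> central (occ fib_word_g (0 # u))
    \<and> IP_set (occ fib_word_g (1 # u)) \<and> central (occ fib_word_g (1 # u))"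
proof -
  have lu: "length u = k" unfolding u_def by simp
  have ui: "i < k \<Longrightarrow> u ! i = cw i" for i unfolding u_def by (simp add: fib_word_cw)
  have occ_f: "occ fib_word u = {n. \<forall>i<k. cw (n+i) = cw i}"
    unfolding occ_def lu using ui by (auto simp: fib_word_cw)
  obtain \<delta> where d: "\<delta> > 0" "\<forall>n. (frac (real n * bb) < \<delta> \<or> frac (real n * bb) > 1 - \<delta>) \<longrightarrow> (\<forall>i<k. cw (n+i) = cw i)"
    using occ_delta[of k] by blast
  have ipstar: "IP_star_set (occ fib_word u)"
    by (rule ipstar_gen[OF d(1)]) (use d(2) occ_f in auto)
  have cstar: "central_star (occ fib_word u)"
    unfolding central_star_def
  proof (intro allI impI)
    fix p assume p: "minimal_idempotent p"
    then have pp: "uf p" "uf_plus p p = p" "\<forall>n. {n} \<notin> p"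
      unfolding minimal_idempotent_def betaN_iff by auto
    show "occ fib_word u \<in> p"
    proof (rule ccontr)
      assume "occ fib_word u \<notin> p"
      then have "- occ fib_word u \<in> p" using uf_compl[OF pp(1)] by simp
      then have "IP_set (- occ fib_word u)" using galvin_glazer[OF pp] by simp
      then have "occ fib_word u \<inter> - occ fib_word u \<noteq> {}" using ipstar unfolding IP_star_set_def by blast
      then show False by auto
    qed
  qed
  have gcw: "n \<ge> 1 \<Longrightarrow> fib_word_g n = cw (n - 1)" for n unfolding fib_word_g_def by (simp add: fib_word_cw)
  have cw_frac: "n \<ge> 1 \<Longrightarrow> cw (n - 1) = (if frac (real n * bb) \<ge> 1 - bb then 1 else 0)" for n
    unfolding cw_def by simp
  define d0 where "d0 = min \<delta> (1 - bb)"
  have d0: "d0 > 0" unfolding d0_def using d(1) bb_half by auto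
  have sub0: "Ad bb d0 \<subseteq> occ fib_word_g (0 # u)"
  proof
    fix n assume n: "n \<in> Ad bb d0"
    then have nf: "0 < frac (real n * bb)" "frac (real n * bb) < d0" unfolding Ad_def by (auto simp del: frac_gt_0_iff)
    then have n1: "n \<ge> 1" by (cases n) auto
    have g0: "fib_word_g n = 0" using gcw[OF n1] cw_frac[OF n1] nf unfolding d0_def by auto
    have rest: "\<forall>i<k. cw (n+i) = cw i" using d(2) nf unfolding d0_def by auto
    show "n \<in> occ fib_word_g (0 # u)"
      unfolding occ_def
    proof (intro CollectI allI impI)
      fix i assume i: "i < length (0 # u)"
      show "fib_word_g (n + i) = (0 # u) ! i"
      proof (cases i)
        case 0 then show ?thesis using g0 by simp
      next
        case (Suc j)
        then have "j < k" using i lu by simp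
        then show ?thesis using Suc rest ui fib_word_cw unfolding fib_word_g_def by simp
      qed
    qed
  qed
  obtain p0 where p0: "minimal_idempotent p0" "\<forall>\<delta>>0. Ad bb \<delta> \<in> p0"
    using exists_right_idem[OF bb_irr] by auto
  have p0p: "uf p0" "uf_plus p0 p0 = p0" "\<forall>n. {n} \<notin> p0"
    using p0(1) unfolding minimal_idempotent_def betaN_iff by auto
  have g0in: "occ fib_word_g (0 # u) \<in> p0" using uf_mono[OF p0p(1)] p0(2) d0 sub0 by blast
  have c0: "central (occ fib_word_g (0 # u))" unfolding central_def using p0(1) g0in by blast
  have ip0: "IP_set (occ fib_word_g (0 # u))" using galvin_glazer[OF p0p g0in] .
  have nbb: "- bb \<notin> \<rat>" using bb_irr by (metis minus_minus Rats_minus_iff)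
  define d1 where "d1 = min \<delta> bb"
  have d1: "d1 > 0" unfolding d1_def using d(1) bb_pos by auto
  have sub1: "Ad (- bb) d1 \<subseteq> occ fib_word_g (1 # u)"
  proof
    fix n assume n: "n \<in> Ad (- bb) d1"
    then have nf0: "0 < frac (- (real n * bb))" "frac (- (real n * bb)) < d1" unfolding Ad_def by (auto simp del: frac_gt_0_iff)
    then have ni: "real n * bb \<notin> \<int>" using frac_neg[of "real n * bb"] by (auto split: if_splits)
    then have "frac (- (real n * bb)) = 1 - frac (real n * bb)" unfolding frac_neg[of "real n * bb"] by simp
    then have nf: "frac (real n * bb) > 1 - d1" using nf0 by simp
    have n1: "n \<ge> 1" using ni by (cases n) auto
    have g1: "fib_word_g n = 1" using gcw[OF n1] cw_frac[OF n1] nf unfolding d1_def by auto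
    have rest: "\<forall>i<k. cw (n+i) = cw i" using d(2) nf unfolding d1_def by auto
    show "n \<in> occ fib_word_g (1 # u)"
      unfolding occ_def
    proof (intro CollectI allI impI)
      fix i assume i: "i < length (1 # u)"
      show "fib_word_g (n + i) = (1 # u) ! i"
      proof (cases i)
        case 0 then show ?thesis using g1 by simp
      next
        case (Suc j)
        then have "j < k" using i lu by simp
        then show ?thesis using Suc rest ui fib_word_cw unfolding fib_word_g_def by simp
      qed
    qed
  qed
  obtain p1 where p1: "minimal_idempotent p1" "\<forall>\<delta>>0. Ad (- bb) \<delta> \<in> p1"
    using exists_right_idem[OF nbb] by auto
  have p1p: "uf p1" "uf_plus p1 p1 = p1" "\<forall>n. {n} \<notin> p1"
    using p1(1) unfolding minimal_idempotent_def betaN_iff by auto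
  have g1in: "occ fib_word_g (1 # u) \<in> p1" using uf_mono[OF p1p(1)] p1(2) d1 sub1 by blast
  have c1: "central (occ fib_word_g (1 # u))" unfolding central_def using p1(1) g1in by blast
  have ip1: "IP_set (occ fib_word_g (1 # u))" using galvin_glazer[OF p1p g1in] .
  show ?thesis using ipstar cstar ip0 c0 ip1 c1 by simp
qed


end
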